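(* Fix $H\in(3/4,1)$, $\mu\in\mathbb{R}$, $\sigma>0$. For $\alpha>0$ let $Q^{\alpha}$ be the law on $\mathcal{C}[0,1]$ of $\alpha Z^H_t+B_t$, $t\in[0,1]$, where $B$ is a standard Brownian motion and $Z^H$ an independent fractional Brownian motion with Hurst parameter $H$, and let $Q_{\mu\alpha/\sigma}$ be the law on $\mathcal{C}[0,1]$ of $W_t-\frac{\mu\alpha}{\sigma}t$, $W$ a standard Brownian motion. For $n\ge1$ let $Y_n(\omega)=(\omega(\tfrac1n)-\omega(0),\dots,\omega(1)-\omega(\tfrac{n-1}n))^T$ and let $Q^{\alpha,n}$, $Q^n_{\mu\alpha/\sigma}$ be the restrictions of $Q^\alpha$, $Q_{\mu\alpha/\sigma}$ to $\sigma(Y_n)$. Then for each $n>1$, $(Q^{\alpha,n})_{\alpha>0}$ is entirely asymptotically separable from $(Q^n_{\mu\alpha/\sigma})_{\alpha>0}$ as $\alpha\to\infty$: there exist $\alpha_k\to\infty$ and sets $A^k\in\sigma(Y_n)$ with $\lim_{k\to\infty}Q^{\alpha_k,n}(A^k)=1$ and $\lim_{k\to\infty}Q^n_{\mu\alpha_k/\sigma}(A^k)=0$.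
   Context: A fractional Brownian motion with Hurst parameter $H$ is a continuous centred Gaussian process with covariance $\frac12(t^{2H}+s^{2H}-|t-s|^{2H})$. *)

theory Defs
  imports "HOL-Probability.Probability"
begin

definition real_gaussian :: "'a measure \<Rightarrow> ('a \<Rightarrow> real) \<Rightarrow> real \<Rightarrow> real \<Rightarrow> bool" where
  "real_gaussian M X m v \<longleftrightarrow>
     X \<in> borel_measurable M \<and>
     ((v = 0 \<and> (AE \<omega> in M. X \<omega> = m)) \<or>
      (v > 0 \<and> distributed M lborel X (normal_density m (sqrt v))))"

definition cont_centred_gaussian_process ::
  "'a measure \<Rightarrow> (real \<Rightarrow> 'a \<Rightarrow> real) \<Rightarrow> (real \<Rightarrow> real \<Rightarrow> real) \<Rightarrow> bool" where
  "cont_centred_gaussian_process M X K \<longleftrightarrow>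
     (\<forall>t\<in>{0..1}. X t \<in> borel_measurable M) \<and>
     (\<forall>\<omega>\<in>space M. continuous_on {0..1} (\<lambda>t. X t \<omega>)) \<and>
     (\<forall>ts a. finite ts \<longrightarrow> ts \<subseteq> {0..1} \<longrightarrow>
        real_gaussian M (\<lambda>\<omega>. \<Sum>t\<in>ts. a t * X t \<omega>) 0
          (\<Sum>s\<in>ts. \<Sum>t\<in>ts. a s * a t * K s t))"

definition brownian_motion :: "'a measure \<Rightarrow> (real \<Rightarrow> 'a \<Rightarrow> real) \<Rightarrow> bool" where
  "brownian_motion M W \<longleftrightarrow> cont_centred_gaussian_process M W (\<lambda>s t. min s t)"

definition fbm_cov :: "real \<Rightarrow> real \<Rightarrow> real \<Rightarrow> real" where
  "fbm_cov H s t = (t powr (2*H) + s powr (2*H) - \<bar>t - s\<bar> powr (2*H)) / 2"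

definition fractional_brownian_motion :: "'a measure \<Rightarrow> real \<Rightarrow> (real \<Rightarrow> 'a \<Rightarrow> real) \<Rightarrow> bool" where
  "fractional_brownian_motion M H Z \<longleftrightarrow> cont_centred_gaussian_process M Z (fbm_cov H)"

definition path01 :: "(real \<Rightarrow> 'a \<Rightarrow> real) \<Rightarrow> 'a \<Rightarrow> real \<Rightarrow> real" where
  "path01 X \<omega> = (\<lambda>t\<in>{0..1}. X t \<omega>)"

definition Yinc :: "nat \<Rightarrow> (real \<Rightarrow> real) \<Rightarrow> nat \<Rightarrow> real" where
  "Yinc n f = (\<lambda>i\<in>{..<n}. f (real (Suc i) / real n) - f (real i / real n))"

end

theory Submission imports Defs begin

lemma tail_to_zero:
  assumes "prob_space M" and G[measurable]: "G \<in> borel_measurable M"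
  shows "(\<lambda>k. measure M {\<omega>\<in>space M. real (Suc k) \<le> \<bar>G \<omega>\<bar>}) \<longlonglongrightarrow> 0"
proof -
  interpret prob_space M by fact
  have "(\<lambda>k. measure M {\<omega>\<in>space M. real (Suc k) \<le> \<bar>G \<omega>\<bar>}) \<longlonglongrightarrow>
        measure M (\<Inter>k. {\<omega>\<in>space M. real (Suc k) \<le> \<bar>G \<omega>\<bar>})"
    by (rule finite_Lim_measure_decseq) (auto simp: decseq_def)
  moreover have "(\<Inter>k. {\<omega>\<in>space M. real (Suc k) \<le> \<bar>G \<omega>\<bar>}) = {}"
  proof (rule ccontr)
    assume "(\<Inter>k. {\<omega>\<in>space M. real (Suc k) \<le> \<bar>G \<omega>\<bar>}) \<noteq> {}"
    then obtain \<omega> where h: "\<And>k. real (Suc k) \<le> \<bar>G \<omega>\<bar>" by blast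
    obtain k where "\<bar>G \<omega>\<bar> < real k" using reals_Archimedean2 by blast
    with h[of k] show False by simp
  qed
  ultimately show ?thesis by simp
qed

lemma small_to_zero:
  assumes "prob_space M" and X[measurable]: "X \<in> borel_measurable M"
    and z: "measure M {\<omega>\<in>space M. X \<omega> = 0} = 0"
  shows "(\<lambda>k. measure M {\<omega>\<in>space M. \<bar>X \<omega>\<bar> \<le> 2 / real (Suc k)}) \<longlonglongrightarrow> 0"
proof -
  interpret prob_space M by fact
  have "(\<lambda>k. measure M {\<omega>\<in>space M. \<bar>X \<omega>\<bar> \<le> 2 / real (Suc k)}) \<longlonglongrightarrow>
        measure M (\<Inter>k. {\<omega>\<in>space M. \<bar>X \<omega>\<bar> \<le> 2 / real (Suc k)})"
  proof (rule finite_Lim_measure_decseq)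
    show "decseq (\<lambda>k. {\<omega>\<in>space M. \<bar>X \<omega>\<bar> \<le> 2 / real (Suc k)})"
      unfolding decseq_def
    proof (intro allI impI subsetI)
      fix m n \<omega> assume "m \<le> n" "\<omega> \<in> {\<omega>\<in>space M. \<bar>X \<omega>\<bar> \<le> 2 / real (Suc n)}"
      moreover have "2 / real (Suc n) \<le> 2 / real (Suc m)"
        using \<open>m \<le> n\<close> by (intro divide_left_mono) auto
      ultimately show "\<omega> \<in> {\<omega>\<in>space M. \<bar>X \<omega>\<bar> \<le> 2 / real (Suc m)}" by auto
    qed
  qed auto
  moreover have "(\<Inter>k. {\<omega>\<in>space M. \<bar>X \<omega>\<bar> \<le> 2 / real (Suc k)}) = {\<omega>\<in>space M. X \<omega> = 0}"
  proof (intro equalityI subsetI)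
    fix \<omega> assume a: "\<omega> \<in> (\<Inter>k. {\<omega>\<in>space M. \<bar>X \<omega>\<bar> \<le> 2 / real (Suc k)})"
    show "\<omega> \<in> {\<omega>\<in>space M. X \<omega> = 0}"
    proof (rule ccontr)
      assume "\<omega> \<notin> {\<omega>\<in>space M. X \<omega> = 0}"
      with a have p: "\<bar>X \<omega>\<bar> > 0" "\<omega> \<in> space M" by auto
      obtain k where k: "2 / \<bar>X \<omega>\<bar> < real k" using reals_Archimedean2 by blast
      have "\<bar>X \<omega>\<bar> \<le> 2 / real (Suc k)" using a by auto
      hence "\<bar>X \<omega>\<bar> * real (Suc k) \<le> 2" by (simp add: field_simps)
      moreover have "2 < \<bar>X \<omega>\<bar> * real k" using k p by (simp add: field_simps)
      ultimately show False using p by (simp add: algebra_simps)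
    qed
  qed auto
  ultimately show ?thesis using z by simp
qed

lemma gauss_nonzero:
  assumes "prob_space M" "real_gaussian M X 0 v" "v \<noteq> 0"
  shows "measure M {\<omega>\<in>space M. X \<omega> = 0} = 0"
proof -
  from assms have d: "distributed M lborel X (normal_density 0 (sqrt v))"
    unfolding real_gaussian_def by auto
  have "emeasure M (X -` {0} \<inter> space M) = (\<integral>\<^sup>+x. ennreal (normal_density 0 (sqrt v) x) * indicator {0} x \<partial>lborel)"
    by (rule distributed_emeasure[OF d]) simp
  also have "\<dots> = 0" by (rule nn_integral_null_set) (simp add: countable_imp_null_set_lborel)
  finally have "emeasure M (X -` {0} \<inter> space M) = 0" .
  moreover have "X -` {0} \<inter> space M = {\<omega>\<in>space M. X \<omega> = 0}" by auto
  ultimately show ?thesis by (simp add: measure_def)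
qed

lemma var_pos:
  fixes H :: real and n :: nat
  assumes "H < 1" "0 < H" "n > 1"
  defines "h \<equiv> 1 / real n"
  defines "a \<equiv> (\<lambda>t::real. if t = h then -2 else 1::real)"
  shows "(\<Sum>s\<in>{0,h,2*h}. \<Sum>t\<in>{0,h,2*h}. a s * a t * fbm_cov H s t) > 0"
proof -
  have h: "h > 0" using assms by (simp add: h_def)
  let ?p = "h powr (2*H)"
  have q: "(2*h) powr (2*H) = 2 powr (2*H) * ?p" using h powr_mult[of 2 h "2*H"] by simp
  have l: "2 powr (2*H) < 2 powr 2" using assms by (intro powr_less_mono) auto
  have pp: "?p > 0" using h by simp
  have "(\<Sum>s\<in>{0,h,2*h}. \<Sum>t\<in>{0,h,2*h}. a s * a t * fbm_cov H s t) = 4 * ?p - (2*h) powr (2*H)"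
    using h assms by (simp add: a_def fbm_cov_def algebra_simps)
  also have "\<dots> = ?p * (4 - 2 powr (2*H))" unfolding q by (simp add: algebra_simps)
  also have "\<dots> > 0" using l pp by simp
  finally show ?thesis .
qed

lemma Yinc_C:
  assumes "n > (1::nat)"
  shows "(Yinc n f \<in> {y \<in> space (PiM {..<n} (\<lambda>_. borel)). c < \<bar>y 1 - y 0\<bar>}) =
         (c < \<bar>f (2 * (1 / real n)) - 2 * f (1 / real n) + f 0\<bar>)"
proof -
  have "Yinc n f \<in> space (PiM {..<n} (\<lambda>_. borel :: real measure))"
    by (simp add: space_PiM Yinc_def)
  moreover have "Yinc n f 1 - Yinc n f 0 = f (2 * (1 / real n)) - 2 * f (1 / real n) + f 0"
    using assms by (simp add: Yinc_def)
  ultimately show ?thesis by simp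
qed

theorem lemma3p9:
  fixes M :: "'a measure" and N :: "'b measure"
    and Z B :: "real \<Rightarrow> 'a \<Rightarrow> real" and W :: "real \<Rightarrow> 'b \<Rightarrow> real"
    and H \<mu> \<sigma> :: real and n :: nat
  assumes "3/4 < H" "H < 1" "\<sigma> > 0"
    and "prob_space M" "prob_space N"
    and "fractional_brownian_motion M H Z"
    and "brownian_motion M B"
    and "prob_space.indep_var M (PiM {0..1} (\<lambda>_. borel)) (path01 Z)
                                (PiM {0..1} (\<lambda>_. borel)) (path01 B)"
    and "brownian_motion N W"
    and "n > 1"
  shows "\<exists>\<alpha> :: nat \<Rightarrow> real. (\<forall>k. \<alpha> k > 0) \<and> filterlim \<alpha> at_top sequentially \<and>
          (\<exists>C :: nat \<Rightarrow> (nat \<Rightarrow> real) set.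
             (\<forall>k. C k \<in> sets (PiM {..<n} (\<lambda>_. borel))) \<and>
             (\<lambda>k. measure M {\<omega> \<in> space M. Yinc n (\<lambda>t. \<alpha> k * Z t \<omega> + B t \<omega>) \<in> C k})
                \<longlonglongrightarrow> 1 \<and>
             (\<lambda>k. measure N {\<omega> \<in> space N. Yinc n (\<lambda>t. W t \<omega> - \<mu> * \<alpha> k / \<sigma> * t) \<in> C k})
                \<longlonglongrightarrow> 0)"
proof -
  interpret PM: prob_space M by fact
  interpret PN: prob_space N by fact
  define h where "h = 1 / real n"
  have h0: "h > 0" "0 \<le> h" "h \<le> 1" "2 * h \<le> 1" "0 \<le> 2 * h"
    using assms(10) by (auto simp: h_def field_simps)
  have hin: "0 \<in> {0..1::real}" "h \<in> {0..1}" "2*h \<in> {0..1}" using h0 by auto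
  define a where "a = (\<lambda>t::real. if t = h then -2 else 1::real)"
  define v where "v = (\<Sum>s\<in>{0,h,2*h}. \<Sum>t\<in>{0,h,2*h}. a s * a t * fbm_cov H s t)"
  have vpos: "v > 0" unfolding v_def a_def h_def
    by (rule var_pos) (use assms in auto)
  define X where "X = (\<lambda>\<omega>. \<Sum>t\<in>{0,h,2*h}. a t * Z t \<omega>)"
  have Xg: "real_gaussian M X 0 v"
    using assms(6) hin unfolding fractional_brownian_motion_def cont_centred_gaussian_process_def
      X_def v_def by auto
  have Xm[measurable]: "X \<in> borel_measurable M" using Xg by (simp add: real_gaussian_def)
  have X0: "measure M {\<omega>\<in>space M. X \<omega> = 0} = 0"
    using gauss_nonzero[OF assms(4) Xg] vpos by simp
  have Xeq: "X \<omega> = Z (2*h) \<omega> - 2 * Z h \<omega> + Z 0 \<omega>" for \<omega>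
    using h0 by (simp add: X_def a_def)
  define G where "G = (\<lambda>\<omega>. B (2*h) \<omega> - 2 * B h \<omega> + B 0 \<omega>)"
  have Gm[measurable]: "G \<in> borel_measurable M"
    using assms(7) hin unfolding G_def brownian_motion_def cont_centred_gaussian_process_def
    by (intro borel_measurable_add borel_measurable_diff borel_measurable_times) auto
  define GN where "GN = (\<lambda>\<omega>. W (2*h) \<omega> - 2 * W h \<omega> + W 0 \<omega>)"
  have GNm[measurable]: "GN \<in> borel_measurable N"
    using assms(9) hin unfolding GN_def brownian_motion_def cont_centred_gaussian_process_def
    by (intro borel_measurable_add borel_measurable_diff borel_measurable_times) auto
  define \<alpha> where "\<alpha> = (\<lambda>k. real (Suc k) ^ 2)"
  define C where "C = (\<lambda>k. {y \<in> space (PiM {..<n} (\<lambda>_. borel)). real (Suc k) < \<bar>y 1 - y 0\<bar>})"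
  have apos: "\<forall>k. \<alpha> k > 0" by (simp add: \<alpha>_def)
  have alim: "filterlim \<alpha> at_top sequentially"
  proof -
    have "filterlim (\<lambda>k. real (Suc k)) at_top sequentially"
      by (rule filterlim_compose[OF filterlim_real_sequentially filterlim_Suc])
    then show ?thesis unfolding \<alpha>_def
      by (intro filterlim_pow_at_top) auto
  qed
  have Cm: "\<forall>k. C k \<in> sets (PiM {..<n} (\<lambda>_. borel))"
  proof
    fix k
    have [measurable]: "(\<lambda>y. y 1) \<in> borel_measurable (PiM {..<n} (\<lambda>_. borel :: real measure))"
      using assms(10) by (intro measurable_component_singleton) auto
    have [measurable]: "(\<lambda>y. y 0) \<in> borel_measurable (PiM {..<n} (\<lambda>_. borel :: real measure))"
      using assms(10) by (intro measurable_component_singleton) auto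
    show "C k \<in> sets (PiM {..<n} (\<lambda>_. borel))" unfolding C_def by measurable
  qed
  have SM: "{\<omega> \<in> space M. Yinc n (\<lambda>t. \<alpha> k * Z t \<omega> + B t \<omega>) \<in> C k} =
            {\<omega> \<in> space M. real (Suc k) < \<bar>\<alpha> k * X \<omega> + G \<omega>\<bar>}" for k
    unfolding C_def using assms(10)
    by (subst Yinc_C) (auto simp: Xeq G_def h_def algebra_simps)
  have SN: "{\<omega> \<in> space N. Yinc n (\<lambda>t. W t \<omega> - \<mu> * \<alpha> k / \<sigma> * t) \<in> C k} =
            {\<omega> \<in> space N. real (Suc k) < \<bar>GN \<omega>\<bar>}" for k
    unfolding C_def using assms(10)
    by (subst Yinc_C) (auto simp: GN_def h_def algebra_simps)
  have limN: "(\<lambda>k. measure N {\<omega> \<in> space N. real (Suc k) < \<bar>GN \<omega>\<bar>}) \<longlonglongrightarrow> 0"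
  proof (rule tendsto_sandwich[OF _ _ tendsto_const tail_to_zero[OF assms(5) GNm]])
    show "\<forall>\<^sub>F k in sequentially. 0 \<le> measure N {\<omega> \<in> space N. real (Suc k) < \<bar>GN \<omega>\<bar>}" by simp
    show "\<forall>\<^sub>F k in sequentially. measure N {\<omega> \<in> space N. real (Suc k) < \<bar>GN \<omega>\<bar>}
            \<le> measure N {\<omega> \<in> space N. real (Suc k) \<le> \<bar>GN \<omega>\<bar>}"
      by (intro always_eventually allI PN.finite_measure_mono) auto
  qed
  define A1 where "A1 = (\<lambda>k. {\<omega>\<in>space M. \<bar>X \<omega>\<bar> \<le> 2 / real (Suc k)})"
  define A2 where "A2 = (\<lambda>k. {\<omega>\<in>space M. real (Suc k) \<le> \<bar>G \<omega>\<bar>})"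
  have l1: "(\<lambda>k. measure M (A1 k)) \<longlonglongrightarrow> 0" unfolding A1_def
    by (rule small_to_zero[OF assms(4) Xm X0])
  have l2: "(\<lambda>k. measure M (A2 k)) \<longlonglongrightarrow> 0" unfolding A2_def
    by (rule tail_to_zero[OF assms(4) Gm])
  have A1m: "A1 k \<in> sets M" and A2m: "A2 k \<in> sets M" for k
    unfolding A1_def A2_def by measurable
  have sub: "space M - (A1 k \<union> A2 k) \<subseteq> {\<omega> \<in> space M. real (Suc k) < \<bar>\<alpha> k * X \<omega> + G \<omega>\<bar>}" for k
  proof
    fix \<omega> assume w: "\<omega> \<in> space M - (A1 k \<union> A2 k)"
    define r where "r = real (Suc k)"
    have r: "r > 0" by (simp add: r_def)
    have x: "\<bar>X \<omega>\<bar> > 2 / r" and g: "\<bar>G \<omega>\<bar> < r" using w by (auto simp: A1_def A2_def r_def)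
    have "r * \<bar>X \<omega>\<bar> > 2" using x r by (simp add: field_simps)
    hence "r * (r * \<bar>X \<omega>\<bar>) > r * 2" using r by simp
    hence "\<bar>\<alpha> k * X \<omega>\<bar> > 2 * r" by (simp add: \<alpha>_def r_def abs_mult power2_eq_square algebra_simps)
    hence "\<bar>\<alpha> k * X \<omega> + G \<omega>\<bar> > r" using g by linarith
    thus "\<omega> \<in> {\<omega> \<in> space M. real (Suc k) < \<bar>\<alpha> k * X \<omega> + G \<omega>\<bar>}" using w by (simp add: r_def)
  qed
  have limM: "(\<lambda>k. measure M {\<omega> \<in> space M. real (Suc k) < \<bar>\<alpha> k * X \<omega> + G \<omega>\<bar>}) \<longlonglongrightarrow> 1"
  proof (rule tendsto_sandwich[OF _ _ _ tendsto_const])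
    have "(\<lambda>k. 1 - (measure M (A1 k) + measure M (A2 k))) \<longlonglongrightarrow> 1 - (0 + 0)"
      by (intro tendsto_intros l1 l2)
    thus "(\<lambda>k. 1 - (measure M (A1 k) + measure M (A2 k))) \<longlonglongrightarrow> 1" by simp
    show "\<forall>\<^sub>F k in sequentially. measure M {\<omega> \<in> space M. real (Suc k) < \<bar>\<alpha> k * X \<omega> + G \<omega>\<bar>} \<le> 1"
      by simp
    show "\<forall>\<^sub>F k in sequentially. 1 - (measure M (A1 k) + measure M (A2 k))
            \<le> measure M {\<omega> \<in> space M. real (Suc k) < \<bar>\<alpha> k * X \<omega> + G \<omega>\<bar>}"
    proof (intro always_eventually allI)
      fix k
      have "1 - (measure M (A1 k) + measure M (A2 k)) \<le> 1 - measure M (A1 k \<union> A2 k)"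
        using measure_Un_le[OF A1m[of k] A2m[of k]] by simp
      also have "\<dots> = measure M (space M - (A1 k \<union> A2 k))"
        using A1m A2m by (simp add: PM.prob_compl)
      also have "\<dots> \<le> measure M {\<omega> \<in> space M. real (Suc k) < \<bar>\<alpha> k * X \<omega> + G \<omega>\<bar>}"
        by (intro PM.finite_measure_mono sub) measurable
      finally show "1 - (measure M (A1 k) + measure M (A2 k))
            \<le> measure M {\<omega> \<in> space M. real (Suc k) < \<bar>\<alpha> k * X \<omega> + G \<omega>\<bar>}" .
    qed
  qed
  show ?thesis
    by (intro exI[of _ \<alpha>] conjI apos alim exI[of _ C] Cm) (simp_all only: SM SN limM limN)
qed

end
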